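(* Let $S_0>0$, $\nu>0$, $J>0$, and let $v_n\ge 0$ ($n\in\mathbb{N}$) with $\sum_n v_n S_0^n<\infty$. Let $S:\mathbb{R}\to\mathbb{R}$ be an equilibrium correlation function that solves, for $t\ge 0$, the mode-coupling equations $$J^{-1}\ddot S(t)+\nu\dot S(t)+S_0^{-1}S(t)+\int_0^t M(t-t')\dot S(t')\,\mathrm{d}t'=0,\qquad M(t)=\sum_{n\in\mathbb{N}}v_nS(t)^n,$$ with $S(0)=S_0$, $\dot S(0)=0$, and such that $M$ is also an equilibrium correlation function. Then $\lim_{t\to\infty}S(t)$ exists.
   Context: An equilibrium correlation function is a function of the form $t\mapsto\int_{\mathbb{R}}e^{-i\omega t}\rho(\mathrm{d}\omega)$ with $\rho$ a finite symmetric Borel measure on $\mathbb{R}$. *)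

theory Defs
  imports "HOL-Analysis.Analysis"
begin

definition eq_corr :: "(real \<Rightarrow> real) \<Rightarrow> bool" where
  "eq_corr f \<longleftrightarrow>
     (\<exists>\<rho> :: real measure.
        sets \<rho> = sets borel \<and> finite_measure \<rho> \<and>
        (\<forall>A \<in> sets borel. emeasure \<rho> (uminus ` A) = emeasure \<rho> A) \<and>
        (\<forall>t. complex_of_real (f t) = integral\<^sup>L \<rho> (\<lambda>\<omega>. cis (- (\<omega> * t)))))"

end

theory Submission
  imports Defs
begin


lemma meas_borel_transfer:
  assumes "sets \<mu> = sets borel" "f \<in> borel_measurable borel"
  shows "f \<in> borel_measurable \<mu>"
  using assms measurable_cong_sets[OF assms(1) refl] by blast

lemma cont_meas:
  fixes f :: "real \<Rightarrow> real"
  assumes "sets \<mu> = sets borel" "continuous_on UNIV f"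
  shows "f \<in> borel_measurable \<mu>"
  by (rule meas_borel_transfer[OF assms(1) borel_measurable_continuous_onI[OF assms(2)]])

lemma deriv_LINT:
  fixes \<mu> :: "'a measure" and f f' :: "real \<Rightarrow> 'a \<Rightarrow> real"
  assumes fin: "finite_measure \<mu>"
    and int: "\<And>x. x \<in> {a..b} \<Longrightarrow> integrable \<mu> (f x)"
    and meas': "f' x \<in> borel_measurable \<mu>"
    and der: "\<And>y \<omega>. y \<in> {a..b} \<Longrightarrow> ((\<lambda>x. f x \<omega>) has_real_derivative f' y \<omega>) (at y within {a..b})"
    and bnd: "\<And>y \<omega>. y \<in> {a..b} \<Longrightarrow> \<bar>f' y \<omega>\<bar> \<le> B"
    and x: "x \<in> {a..b}"
  shows "((\<lambda>x. integral\<^sup>L \<mu> (f x)) has_real_derivative integral\<^sup>L \<mu> (f' x)) (at x within {a..b})"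
proof -
  interpret finite_measure \<mu> by (rule fin)
  have lip: "\<bar>f y \<omega> - f x \<omega>\<bar> \<le> B * \<bar>y - x\<bar>" if "y \<in> {a..b}" for y \<omega>
    using field_differentiable_bound[of "{a..b}" "\<lambda>x. f x \<omega>" "\<lambda>y. f' y \<omega>" B y x] der bnd that x
    by auto
  show ?thesis
    unfolding has_field_derivative_iff tendsto_at_iff_sequentially
  proof (intro allI impI)
    fix X :: "nat \<Rightarrow> real"
    assume X: "\<forall>i. X i \<in> {a..b} - {x}" "X \<longlonglongrightarrow> x"
    have eq: "((\<lambda>y. (integral\<^sup>L \<mu> (f y) - integral\<^sup>L \<mu> (f x)) / (y - x)) \<circ> X) i
        = integral\<^sup>L \<mu> (\<lambda>\<omega>. (f (X i) \<omega> - f x \<omega>) / (X i - x))" for i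
      using X int x by (simp add: integral_diff)
    have "(\<lambda>i. integral\<^sup>L \<mu> (\<lambda>\<omega>. (f (X i) \<omega> - f x \<omega>) / (X i - x))) \<longlonglongrightarrow> integral\<^sup>L \<mu> (f' x)"
    proof (rule integral_dominated_convergence[where w="\<lambda>_. B"])
      show "f' x \<in> borel_measurable \<mu>" by (rule meas')
      show "(\<lambda>\<omega>. (f (X i) \<omega> - f x \<omega>) / (X i - x)) \<in> borel_measurable \<mu>" for i
        using int[of "X i"] int[OF x] X by auto
      show "integrable \<mu> (\<lambda>_. B)" by simp
      show "AE \<omega> in \<mu>. (\<lambda>i. (f (X i) \<omega> - f x \<omega>) / (X i - x)) \<longlonglongrightarrow> f' x \<omega>"
      proof (intro AE_I2)
        fix \<omega>
        have "((\<lambda>y. (f y \<omega> - f x \<omega>) / (y - x)) \<longlongrightarrow> f' x \<omega>) (at x within {a..b})"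
          using der[OF x, of \<omega>] unfolding has_field_derivative_iff .
        then show "(\<lambda>i. (f (X i) \<omega> - f x \<omega>) / (X i - x)) \<longlonglongrightarrow> f' x \<omega>"
          unfolding tendsto_at_iff_sequentially comp_def using X by blast
      qed
      show "AE \<omega> in \<mu>. norm ((f (X i) \<omega> - f x \<omega>) / (X i - x)) \<le> B" for i
      proof (intro AE_I2)
        fix \<omega>
        have "X i \<noteq> x" "X i \<in> {a..b}" using X by auto
        then show "norm ((f (X i) \<omega> - f x \<omega>) / (X i - x)) \<le> B"
          using lip[of "X i" \<omega>] by (simp add: divide_le_eq abs_divide)
      qed
    qed
    then show "((\<lambda>y. (integral\<^sup>L \<mu> (f y) - integral\<^sup>L \<mu> (f x)) / (y - x)) \<circ> X) \<longlonglongrightarrow> integral\<^sup>L \<mu> (f' x)"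
      unfolding eq .
  qed
qed

lemma cont_LINT:
  fixes \<mu> :: "'a measure" and f :: "real \<Rightarrow> 'a \<Rightarrow> real"
  assumes fin: "finite_measure \<mu>"
    and meas: "\<And>x. f x \<in> borel_measurable \<mu>"
    and cont: "\<And>\<omega>. isCont (\<lambda>x. f x \<omega>) x0"
    and bnd: "\<And>y \<omega>. \<bar>f y \<omega>\<bar> \<le> B"
  shows "isCont (\<lambda>x. integral\<^sup>L \<mu> (f x)) x0"
proof -
  interpret finite_measure \<mu> by (rule fin)
  show ?thesis
    unfolding isCont_def tendsto_at_iff_sequentially
  proof (intro allI impI)
    fix X :: "nat \<Rightarrow> real"
    assume X: "\<forall>i. X i \<in> UNIV - {x0}" "X \<longlonglongrightarrow> x0"
    have "(\<lambda>i. integral\<^sup>L \<mu> (f (X i))) \<longlonglongrightarrow> integral\<^sup>L \<mu> (f x0)"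
    proof (rule integral_dominated_convergence[where w="\<lambda>_. B"])
      show "AE \<omega> in \<mu>. (\<lambda>i. f (X i) \<omega>) \<longlonglongrightarrow> f x0 \<omega>"
        using isCont_tendsto_compose[OF cont X(2)] by (intro AE_I2) auto
      show "AE \<omega> in \<mu>. norm (f (X i) \<omega>) \<le> B" for i using bnd by auto
    qed (auto simp: meas)
    then show "((\<lambda>x. integral\<^sup>L \<mu> (f x)) \<circ> X) \<longlonglongrightarrow> integral\<^sup>L \<mu> (f x0)"
      by (simp add: comp_def)
  qed
qed

lemma mono_helper:
  fixes f f' :: "real \<Rightarrow> real"
  assumes ab: "a \<le> b"
    and der: "\<And>z. z \<in> {a..b} \<Longrightarrow> (f has_real_derivative f' z) (at z within {a..b})"
    and nn: "\<And>z. z \<in> {a..b} \<Longrightarrow> f' z \<ge> 0"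
  shows "f a \<le> f b"
proof (rule DERIV_nonneg_imp_increasing_open[OF ab])
  show "continuous_on {a..b} f"
    using der DERIV_continuous continuous_on_eq_continuous_within by blast
  fix x assume x: "a < x" "x < b"
  then have "(f has_real_derivative f' x) (at x)"
    using der[of x] at_within_Icc_at[OF x] by simp
  then show "\<exists>y. (f has_real_derivative y) (at x) \<and> 0 \<le> y" using nn[of x] x by auto
qed

lemma deriv_within_sub:
  assumes "(f has_real_derivative d) (at x within {0..})" "{a..b} \<subseteq> {0..}"
  shows "(f has_real_derivative d) (at x within {a..b})"
  using has_field_derivative_subset[OF assms] .

lemma abs_mult_le1:
  fixes c x :: real
  assumes "\<bar>c\<bar> \<le> 1" "\<bar>x\<bar> \<le> B"
  shows "\<bar>c * x\<bar> \<le> B"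
proof -
  have "\<bar>c * x\<bar> = \<bar>c\<bar> * \<bar>x\<bar>" by (simp add: abs_mult)
  also have "\<dots> \<le> 1 * B" using assms by (intro mult_mono) auto
  finally show ?thesis by simp
qed



lemma corr_facts:
  assumes "eq_corr f"
  obtains \<rho> where "sets \<rho> = sets borel" "finite_measure \<rho>" "space \<rho> = UNIV"
    "\<And>t. f t = (\<integral>\<omega>. cos (\<omega> * t) \<partial>\<rho>)" "\<And>t. (\<integral>\<omega>. sin (\<omega> * t) \<partial>\<rho>) = 0"
    "f 0 = measure \<rho> UNIV"
proof -
  from assms obtain \<rho> :: "real measure" where r: "sets \<rho> = sets borel" "finite_measure \<rho>"
    "\<And>t. complex_of_real (f t) = integral\<^sup>L \<rho> (\<lambda>\<omega>. cis (- (\<omega> * t)))"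
    unfolding eq_corr_def by blast
  interpret finite_measure \<rho> by (rule r(2))
  have sp: "space \<rho> = UNIV" using sets_eq_imp_space_eq[OF r(1)] by simp
  have int: "integrable \<rho> (\<lambda>\<omega>. cis (- (\<omega> * t)))" for t
  proof (rule integrable_const_bound[where B=1])
    show "(\<lambda>\<omega>. cis (- (\<omega> * t))) \<in> borel_measurable \<rho>"
      by (rule meas_borel_transfer[OF r(1)]) (intro borel_measurable_continuous_onI continuous_intros)
  qed simp
  have c: "f t = (\<integral>\<omega>. cos (\<omega> * t) \<partial>\<rho>)" for t
  proof -
    have "f t = Re (complex_of_real (f t))" by simp
    also have "\<dots> = (\<integral>\<omega>. Re (cis (- (\<omega> * t))) \<partial>\<rho>)" using r(3)[of t] integral_Re[OF int[of t]] by simp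
    finally show ?thesis by simp
  qed
  have s: "(\<integral>\<omega>. sin (\<omega> * t) \<partial>\<rho>) = 0" for t
  proof -
    have "0 = Im (complex_of_real (f t))" by simp
    also have "\<dots> = (\<integral>\<omega>. Im (cis (- (\<omega> * t))) \<partial>\<rho>)" using r(3)[of t] integral_Im[OF int[of t]] by simp
    finally show ?thesis by simp
  qed
  have "f 0 = measure \<rho> UNIV" using c[of 0] sp by simp
  with r sp c s show ?thesis using that by blast
qed



theorem mainTheorem4:
  fixes S0 \<nu> J :: real and v :: "nat \<Rightarrow> real"
    and S S' S'' M :: "real \<Rightarrow> real"
  assumes S0_pos: "S0 > 0" and nu_pos: "\<nu> > 0" and J_pos: "J > 0"
    and v_nonneg: "\<And>n. v n \<ge> 0"
    and v_summable: "summable (\<lambda>n. v (Suc n) * S0 ^ Suc n)"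
    and S_corr: "eq_corr S"
    and S_deriv: "\<And>t. t \<ge> 0 \<Longrightarrow> (S has_real_derivative S' t) (at t within {0..})"
    and S'_deriv: "\<And>t. t \<ge> 0 \<Longrightarrow> (S' has_real_derivative S'' t) (at t within {0..})"
    and M_def: "\<And>t. M t = (\<Sum>n. v (Suc n) * S t ^ Suc n)"
    and M_corr: "eq_corr M"
    and MCT: "\<And>t. t \<ge> 0 \<Longrightarrow>
        S'' t / J + \<nu> * S' t + S t / S0 + integral {0..t} (\<lambda>s. M (t - s) * S' s) = 0"
    and S_init: "S 0 = S0"
    and S'_init: "S' 0 = 0"
  shows "\<exists>L. (S \<longlongrightarrow> L) at_top"
proof -
  obtain \<rho> where r: "sets \<rho> = sets borel" "finite_measure \<rho>" "space \<rho> = UNIV"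
    "\<And>t. S t = (\<integral>\<omega>. cos (\<omega> * t) \<partial>\<rho>)" "S 0 = measure \<rho> UNIV"
    using corr_facts[OF S_corr] by metis
  obtain \<sigma> where s: "sets \<sigma> = sets borel" "finite_measure \<sigma>" "space \<sigma> = UNIV"
    "\<And>t. M t = (\<integral>\<omega>. cos (\<omega> * t) \<partial>\<sigma>)"
    using corr_facts[OF M_corr] by metis
  interpret \<rho>: finite_measure \<rho> by (rule r(2))
  interpret \<sigma>: finite_measure \<sigma> by (rule s(2))
  have mrho: "measure \<rho> UNIV = S0" using r(5) S_init by simp
  have contS': "continuous_on {0..} S'"
    using S'_deriv DERIV_continuous continuous_on_eq_continuous_within by (metis atLeast_iff)
  have contM: "isCont M x" for x
  proof -
    have "isCont (\<lambda>x. \<integral>\<omega>. cos (\<omega> * x) \<partial>\<sigma>) x"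
      by (rule cont_LINT[OF s(2), where B=1])
        (auto intro!: cont_meas[OF s(1)] continuous_intros)
    then show ?thesis using s(4) by (simp add: s(4)[abs_def])
  qed
  have contMon: "continuous_on A M" for A
    using contM by (simp add: continuous_at_imp_continuous_on)
  define C where "C = (\<lambda>\<omega> u. integral {0..u} (\<lambda>s. cos (\<omega> * s) * S' s))"
  define D where "D = (\<lambda>\<omega> u. integral {0..u} (\<lambda>s. sin (\<omega> * s) * S' s))"
  define F where "F = (\<lambda>u. integral {0..u} (\<lambda>s. S' s ^ 2))"
  define I where "I = (\<lambda>u. integral {0..u} (\<lambda>s. M (u - s) * S' s))"
  have dC: "((\<lambda>u. C \<omega> u) has_real_derivative cos (\<omega> * u) * S' u) (at u within {0..T})"
    if "u \<in> {0..T}" for \<omega> u T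
    unfolding C_def
    by (rule integral_has_real_derivative[OF _ that])
      (intro continuous_intros continuous_on_subset[OF contS'], auto)
  have dD: "((\<lambda>u. D \<omega> u) has_real_derivative sin (\<omega> * u) * S' u) (at u within {0..T})"
    if "u \<in> {0..T}" for \<omega> u T
    unfolding D_def
    by (rule integral_has_real_derivative[OF _ that])
      (intro continuous_intros continuous_on_subset[OF contS'], auto)
  have dF: "(F has_real_derivative S' u ^ 2) (at u within {0..T})"
    if "u \<in> {0..T}" for u T
    unfolding F_def
    by (rule integral_has_real_derivative[OF _ that])
      (intro continuous_intros continuous_on_subset[OF contS'], auto)
  have C0: "C \<omega> 0 = 0" "D \<omega> 0 = 0" for \<omega> by (simp_all add: C_def D_def)
  have mC: "(\<lambda>\<omega>. C \<omega> u) \<in> borel_measurable \<sigma>" "(\<lambda>\<omega>. D \<omega> u) \<in> borel_measurable \<sigma>" if "u \<ge> 0" for u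
  proof -
    have cc: "continuous_on (UNIV \<times> cbox 0 u) (\<lambda>(\<omega>, s). g (\<omega> * s) * S' s)"
      if g: "continuous_on UNIV g" for g :: "real \<Rightarrow> real"
    proof -
      have "continuous_on (UNIV \<times> cbox 0 u) (\<lambda>z. g (fst z * snd z) * S' (snd z))"
      proof (intro continuous_on_mult continuous_on_compose2[OF g] continuous_on_compose2[OF contS'])
      qed (auto intro!: continuous_intros)
      then show ?thesis by (simp add: case_prod_beta)
    qed
    have "continuous_on UNIV (\<lambda>\<omega>. integral (cbox 0 u) (\<lambda>s. cos (\<omega> * s) * S' s))"
      by (rule integral_continuous_on_param[OF cc]) (intro continuous_intros)
    then show "(\<lambda>\<omega>. C \<omega> u) \<in> borel_measurable \<sigma>"
      unfolding C_def by (intro meas_borel_transfer[OF s(1)] borel_measurable_continuous_onI) simp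
    have "continuous_on UNIV (\<lambda>\<omega>. integral (cbox 0 u) (\<lambda>s. sin (\<omega> * s) * S' s))"
      by (rule integral_continuous_on_param[OF cc]) (intro continuous_intros)
    then show "(\<lambda>\<omega>. D \<omega> u) \<in> borel_measurable \<sigma>"
      unfolding D_def by (intro meas_borel_transfer[OF s(1)] borel_measurable_continuous_onI) simp
  qed
  have bndS': "\<exists>B\<ge>0. \<forall>s\<in>{0..T}. \<bar>S' s\<bar> \<le> B" for T
  proof (cases "T \<ge> 0")
    case True
    have "\<exists>x\<in>{0..T}. \<forall>y\<in>{0..T}. \<bar>S' y\<bar> \<le> \<bar>S' x\<bar>"
      by (rule continuous_attains_sup) (use True in \<open>auto intro!: continuous_intros continuous_on_subset[OF contS']\<close>)
    then obtain x where "\<forall>y\<in>{0..T}. \<bar>S' y\<bar> \<le> \<bar>S' x\<bar>" by blast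
    then show ?thesis by (intro exI[of _ "\<bar>S' x\<bar>"]) auto
  qed auto
  have bC: "\<bar>C \<omega> w\<bar> \<le> B * T" "\<bar>D \<omega> w\<bar> \<le> B * T"
    if B: "\<forall>s\<in>{0..T}. \<bar>S' s\<bar> \<le> B" "B \<ge> 0" and w: "w \<in> {0..T}" for \<omega> w T B
  proof -
    have bd: "\<bar>cos (\<omega> * z) * S' z\<bar> \<le> B" if "z \<in> {0..T}" for z
      using B that by (intro abs_mult_le1) auto
    have "norm (C \<omega> w - C \<omega> 0) \<le> B * norm (w - 0)"
      by (rule field_differentiable_bound[where S="{0..T}" and f'="\<lambda>w. cos (\<omega> * w) * S' w"])
        (use dC bd w in auto)
    then show "\<bar>C \<omega> w\<bar> \<le> B * T" using C0 w B mult_left_mono[of w T B] by auto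
    have bd: "\<bar>sin (\<omega> * z) * S' z\<bar> \<le> B" if "z \<in> {0..T}" for z
      using B that by (intro abs_mult_le1) auto
    have "norm (D \<omega> w - D \<omega> 0) \<le> B * norm (w - 0)"
      by (rule field_differentiable_bound[where S="{0..T}" and f'="\<lambda>w. sin (\<omega> * w) * S' w"])
        (use dD bd w in auto)
    then show "\<bar>D \<omega> w\<bar> \<le> B * T" using C0 w B mult_left_mono[of w T B] by auto
  qed
  have claim1: "I u = (\<integral>\<omega>. cos (\<omega> * u) * C \<omega> u + sin (\<omega> * u) * D \<omega> u \<partial>\<sigma>)" if u0: "u \<ge> 0" for u
  proof -
    obtain B where B: "B \<ge> 0" "\<forall>s\<in>{0..u}. \<bar>S' s\<bar> \<le> B" using bndS' by blast
    define G where "G = (\<lambda>w. integral {0..w} (\<lambda>s. M (u - s) * S' s))"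
    define H where "H = (\<lambda>w. \<integral>\<omega>. cos (\<omega> * u) * C \<omega> w + sin (\<omega> * u) * D \<omega> w \<partial>\<sigma>)"
    have dG: "(G has_real_derivative M (u - w) * S' w) (at w within {0..u})" if "w \<in> {0..u}" for w
      unfolding G_def
      by (rule integral_has_real_derivative[OF _ that])
        (intro continuous_intros continuous_on_subset[OF contS'] continuous_on_compose2[OF contMon[of UNIV]], auto)
    have dH: "(H has_real_derivative M (u - w) * S' w) (at w within {0..u})" if w: "w \<in> {0..u}" for w
    proof -
      have "(H has_real_derivative (\<integral>\<omega>. cos (\<omega> * u) * (cos (\<omega> * w) * S' w) + sin (\<omega> * u) * (sin (\<omega> * w) * S' w) \<partial>\<sigma>))
          (at w within {0..u})"
        unfolding H_def
      proof (rule deriv_LINT[OF s(2), where B="2*B"])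
        show "integrable \<sigma> (\<lambda>\<omega>. cos (\<omega> * u) * C \<omega> x + sin (\<omega> * u) * D \<omega> x)" if "x \<in> {0..u}" for x
        proof (rule \<sigma>.integrable_const_bound[where B="2*(B*u)"])
          show "AE \<omega> in \<sigma>. norm (cos (\<omega> * u) * C \<omega> x + sin (\<omega> * u) * D \<omega> x) \<le> 2 * (B * u)"
          proof (intro AE_I2)
            fix \<omega>
            have "\<bar>cos (\<omega> * u) * C \<omega> x\<bar> \<le> B * u" "\<bar>sin (\<omega> * u) * D \<omega> x\<bar> \<le> B * u"
              using bC[OF B(2) B(1) that] by (auto intro!: abs_mult_le1)
            then show "norm (cos (\<omega> * u) * C \<omega> x + sin (\<omega> * u) * D \<omega> x) \<le> 2 * (B * u)" by simp
          qed
          show "(\<lambda>\<omega>. cos (\<omega> * u) * C \<omega> x + sin (\<omega> * u) * D \<omega> x) \<in> borel_measurable \<sigma>"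
          proof -
            have "(\<lambda>\<omega>. cos (\<omega> * u)) \<in> borel_measurable \<sigma>" "(\<lambda>\<omega>. sin (\<omega> * u)) \<in> borel_measurable \<sigma>"
              by (auto intro!: cont_meas[OF s(1)] continuous_intros)
            then show ?thesis using mC[of x] that by (intro borel_measurable_add borel_measurable_times) auto
          qed
        qed
        show "(\<lambda>\<omega>. cos (\<omega> * u) * (cos (\<omega> * w) * S' w) + sin (\<omega> * u) * (sin (\<omega> * w) * S' w)) \<in> borel_measurable \<sigma>"
          by (intro cont_meas[OF s(1)]) (auto intro!: continuous_intros)
        show "((\<lambda>x. cos (\<omega> * u) * C \<omega> x + sin (\<omega> * u) * D \<omega> x) has_real_derivative
            cos (\<omega> * u) * (cos (\<omega> * y) * S' y) + sin (\<omega> * u) * (sin (\<omega> * y) * S' y)) (at y within {0..u})"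
          if "y \<in> {0..u}" for y \<omega>
          by (intro DERIV_add DERIV_cmult dC dD that)
        show "\<bar>cos (\<omega> * u) * (cos (\<omega> * y) * S' y) + sin (\<omega> * u) * (sin (\<omega> * y) * S' y)\<bar> \<le> 2 * B"
          if "y \<in> {0..u}" for y \<omega>
        proof -
          have "\<bar>cos (\<omega> * u) * (cos (\<omega> * y) * S' y)\<bar> \<le> B" "\<bar>sin (\<omega> * u) * (sin (\<omega> * y) * S' y)\<bar> \<le> B"
            using B that by (auto intro!: abs_mult_le1)
          then show ?thesis by simp
        qed
      qed (use w in auto)
      moreover have "(\<integral>\<omega>. cos (\<omega> * u) * (cos (\<omega> * w) * S' w) + sin (\<omega> * u) * (sin (\<omega> * w) * S' w) \<partial>\<sigma>)
          = M (u - w) * S' w"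
      proof -
        have "(\<lambda>\<omega>. cos (\<omega> * u) * (cos (\<omega> * w) * S' w) + sin (\<omega> * u) * (sin (\<omega> * w) * S' w))
            = (\<lambda>\<omega>. cos (\<omega> * (u - w)) * S' w)"
          by (rule ext) (simp add: right_diff_distrib cos_diff algebra_simps)
        then show ?thesis by (simp add: s(4))
      qed
      ultimately show ?thesis by simp
    qed
    have "\<exists>c. \<forall>x\<in>{0..u}. G x - H x = c"
      by (rule has_field_derivative_zero_constant)
        (auto intro!: derivative_eq_intros dG dH)
    then obtain c where c: "\<forall>x\<in>{0..u}. G x - H x = c" by blast
    have "G 0 - H 0 = 0" by (simp add: G_def H_def C0)
    then have "G u - H u = 0" using c u0 by force
    then show ?thesis by (simp add: I_def G_def H_def)
  qed
  have energy: "\<nu> * F T \<le> S0 / 2" if T0: "T \<ge> 0" for T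
  proof -
    obtain B where B: "B \<ge> 0" "\<forall>s\<in>{0..T}. \<bar>S' s\<bar> \<le> B" using bndS' by blast
    define \<Phi> where "\<Phi> = (\<lambda>w. \<integral>\<omega>. ((C \<omega> w)^2 + (D \<omega> w)^2) / 2 \<partial>\<sigma>)"
    define E where "E = (\<lambda>w. (S' w)^2 / (2*J) + (S w)^2 / (2*S0) + \<nu> * F w + \<Phi> w)"
    have dPhi: "(\<Phi> has_real_derivative S' w * I w) (at w within {0..T})" if w: "w \<in> {0..T}" for w
    proof -
      have "(\<Phi> has_real_derivative (\<integral>\<omega>. C \<omega> w * (cos (\<omega> * w) * S' w) + D \<omega> w * (sin (\<omega> * w) * S' w) \<partial>\<sigma>))
          (at w within {0..T})"
        unfolding \<Phi>_def
      proof (rule deriv_LINT[OF s(2), where B="2*(B*T)*B"])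
        show "integrable \<sigma> (\<lambda>\<omega>. ((C \<omega> x)^2 + (D \<omega> x)^2) / 2)" if "x \<in> {0..T}" for x
        proof (rule \<sigma>.integrable_const_bound[where B="(B*T)^2"])
          show "AE \<omega> in \<sigma>. norm (((C \<omega> x)^2 + (D \<omega> x)^2) / 2) \<le> (B*T)^2"
          proof (intro AE_I2)
            fix \<omega>
            have "\<bar>C \<omega> x\<bar>^2 \<le> (B * T)^2" "\<bar>D \<omega> x\<bar>^2 \<le> (B * T)^2"
              using power_mono[OF bC(1)[OF B(2) B(1) that, of \<omega>] abs_ge_zero, of 2]
                power_mono[OF bC(2)[OF B(2) B(1) that, of \<omega>] abs_ge_zero, of 2] by auto
            then have "(C \<omega> x)^2 \<le> (B * T)^2" "(D \<omega> x)^2 \<le> (B * T)^2" by simp_all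
            then show "norm (((C \<omega> x)^2 + (D \<omega> x)^2) / 2) \<le> (B*T)^2" by simp
          qed
          show "(\<lambda>\<omega>. ((C \<omega> x)^2 + (D \<omega> x)^2) / 2) \<in> borel_measurable \<sigma>"
            using mC[of x] that by auto
        qed
        show "(\<lambda>\<omega>. C \<omega> w * (cos (\<omega> * w) * S' w) + D \<omega> w * (sin (\<omega> * w) * S' w)) \<in> borel_measurable \<sigma>"
        proof -
          have m2: "(\<lambda>\<omega>. cos (\<omega> * w) * S' w) \<in> borel_measurable \<sigma>" "(\<lambda>\<omega>. sin (\<omega> * w) * S' w) \<in> borel_measurable \<sigma>"
            by (auto intro!: cont_meas[OF s(1)] continuous_intros)
          have m1: "(\<lambda>\<omega>. C \<omega> w) \<in> borel_measurable \<sigma>" "(\<lambda>\<omega>. D \<omega> w) \<in> borel_measurable \<sigma>"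
            using mC[of w] w by auto
          show ?thesis
            by (rule borel_measurable_add[OF borel_measurable_times[OF m1(1) m2(1)] borel_measurable_times[OF m1(2) m2(2)]])
        qed
        show "((\<lambda>x. ((C \<omega> x)^2 + (D \<omega> x)^2) / 2) has_real_derivative
            C \<omega> y * (cos (\<omega> * y) * S' y) + D \<omega> y * (sin (\<omega> * y) * S' y)) (at y within {0..T})"
          if "y \<in> {0..T}" for y \<omega>
          by (rule derivative_eq_intros dC dD that refl | simp)+
        show "\<bar>C \<omega> y * (cos (\<omega> * y) * S' y) + D \<omega> y * (sin (\<omega> * y) * S' y)\<bar> \<le> 2 * (B * T) * B"
          if y: "y \<in> {0..T}" for y \<omega>
        proof -
          have c1: "\<bar>cos (\<omega> * y) * S' y\<bar> \<le> B" "\<bar>sin (\<omega> * y) * S' y\<bar> \<le> B"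
            using B y by (auto intro!: abs_mult_le1)
          have "\<bar>C \<omega> y * (cos (\<omega> * y) * S' y)\<bar> \<le> (B * T) * B" "\<bar>D \<omega> y * (sin (\<omega> * y) * S' y)\<bar> \<le> (B * T) * B"
            using bC[OF B(2) B(1) y] c1 B(1) T0 unfolding abs_mult by (auto intro!: mult_mono)
          then show ?thesis by simp
        qed
      qed (use w in auto)
      moreover have "(\<integral>\<omega>. C \<omega> w * (cos (\<omega> * w) * S' w) + D \<omega> w * (sin (\<omega> * w) * S' w) \<partial>\<sigma>) = S' w * I w"
      proof -
        have "(\<lambda>\<omega>. C \<omega> w * (cos (\<omega> * w) * S' w) + D \<omega> w * (sin (\<omega> * w) * S' w))
            = (\<lambda>\<omega>. (cos (\<omega> * w) * C \<omega> w + sin (\<omega> * w) * D \<omega> w) * S' w)"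
          by (rule ext) (simp add: algebra_simps)
        then show ?thesis using claim1[of w] w by simp
      qed
      ultimately show ?thesis by simp
    qed
    have dE: "(E has_real_derivative 0) (at w within {0..T})" if w: "w \<in> {0..T}" for w
    proof -
      have sub: "{0..T} \<subseteq> {0..}" by auto
      have dS: "(S has_real_derivative S' w) (at w within {0..T})"
        using deriv_within_sub[OF S_deriv sub] w by auto
      have dS': "(S' has_real_derivative S'' w) (at w within {0..T})"
        using deriv_within_sub[OF S'_deriv sub] w by auto
      have "(E has_real_derivative (2 * S' w * S'' w) / (2*J) + (2 * S w * S' w) / (2*S0) + \<nu> * (S' w ^ 2) + S' w * I w)
          (at w within {0..T})"
      proof -
        have q1: "((\<lambda>z. (S' z)^2) has_real_derivative 2 * S' w * S'' w) (at w within {0..T})"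
          using DERIV_power[OF dS', of 2] by (simp add: power2_eq_square algebra_simps)
        have q2: "((\<lambda>z. (S z)^2) has_real_derivative 2 * S w * S' w) (at w within {0..T})"
          using DERIV_power[OF dS, of 2] by (simp add: power2_eq_square algebra_simps)
        show ?thesis unfolding E_def
          by (intro DERIV_add DERIV_cdivide DERIV_cmult q1 q2 dF[OF w] dPhi[OF w])
      qed
      moreover have "(2 * S' w * S'' w) / (2*J) + (2 * S w * S' w) / (2*S0) + \<nu> * (S' w ^ 2) + S' w * I w
          = S' w * (S'' w / J + \<nu> * S' w + S w / S0 + I w)"
        using J_pos S0_pos by (simp add: field_simps power2_eq_square)
      moreover have "S'' w / J + \<nu> * S' w + S w / S0 + I w = 0"
        using MCT[of w] w by (simp add: I_def)
      ultimately show ?thesis by simp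
    qed
    have "\<exists>c. \<forall>x\<in>{0..T}. E x = c"
      by (rule has_field_derivative_zero_constant) (auto intro!: dE)
    then obtain c where c: "\<forall>x\<in>{0..T}. E x = c" by blast
    have "E 0 = S0 / 2"
      using S_init S'_init S0_pos by (simp add: E_def F_def \<Phi>_def C0 power2_eq_square)
    then have ET: "E T = S0 / 2" using c T0 by force
    have "\<Phi> T \<ge> 0" unfolding \<Phi>_def by (rule Bochner_Integration.integral_nonneg) auto
    moreover have "(S' T)^2 / (2*J) \<ge> 0" "(S T)^2 / (2*S0) \<ge> 0" using J_pos S0_pos by auto
    ultimately show ?thesis using ET unfolding E_def by linarith
  qed
  have Fbnd: "F T \<le> S0 / (2 * \<nu>)" if "T \<ge> 0" for T
    using energy[OF that] nu_pos by (simp add: field_simps)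
  have Fmono: "F x \<le> F y" if xy: "0 \<le> x" "x \<le> y" for x y
  proof (rule mono_helper[OF xy(2), where f'="\<lambda>z. S' z ^ 2"])
    show "(F has_real_derivative S' z ^ 2) (at z within {x..y})" if "z \<in> {x..y}" for z
      using has_field_derivative_subset[OF dF[of z y]] that xy by auto
  qed auto
  define L where "L = Sup (F ` {0..})"
  have bddF: "bdd_above (F ` {0..})" using Fbnd by (auto intro!: bdd_aboveI2)
  have FL: "F x \<le> L" if "x \<ge> 0" for x
    unfolding L_def using that bddF by (intro cSup_upper) auto
  have Fconv: "\<exists>N\<ge>0. \<forall>t\<ge>N. \<forall>u\<in>{t..t+h}. F u - F t < \<eta>" if "\<eta> > 0" "h \<ge> 0" for \<eta> h
  proof -
    have "L - \<eta> < Sup (F ` {0..})" using that by (simp add: L_def)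
    then obtain y where y: "y \<in> F ` {0..}" "L - \<eta> < y" using less_cSupD[of "F ` {0..}"] by auto
    then obtain N where N: "N \<ge> 0" "L - \<eta> < F N" by auto
    show ?thesis
    proof (intro exI[of _ N] conjI allI impI ballI)
      fix t u assume t: "N \<le> t" and u: "u \<in> {t..t+h}"
      have "F u \<le> L" using FL[of u] u t N by auto
      moreover have "F N \<le> F t" using Fmono[of N t] N t by auto
      ultimately show "F u - F t < \<eta>" using N by linarith
    qed (use N in auto)
  qed
  have Sosc: "\<bar>S u - S t\<bar> \<le> a * (u - t) + (F u - F t) / (4 * a)" if ta: "0 \<le> t" "t \<le> u" "a > 0" for t u a
  proof -
    have amgm: "a + x^2 / (4*a) - x \<ge> 0" "a + x^2 / (4*a) + x \<ge> 0" for x :: real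
    proof -
      have "a + x^2 / (4*a) - x = (x - 2*a)^2 / (4*a)" "a + x^2 / (4*a) + x = (x + 2*a)^2 / (4*a)"
        using ta(3) by (simp_all add: field_simps power2_eq_square)
      then show "a + x^2 / (4*a) - x \<ge> 0" "a + x^2 / (4*a) + x \<ge> 0" using ta(3) by simp_all
    qed
    have sub: "{t..u} \<subseteq> {0..}" "{t..u} \<subseteq> {0..u}" using ta by auto
    have dS: "(S has_real_derivative S' z) (at z within {t..u})" if "z \<in> {t..u}" for z
      using deriv_within_sub[OF S_deriv sub(1)] that ta by auto
    have dF': "(F has_real_derivative S' z ^ 2) (at z within {t..u})" if "z \<in> {t..u}" for z
      using has_field_derivative_subset[OF dF[of z u] sub(2)] that ta by auto
    have "(a * (t - t) + F t / (4*a) - (S t - S t)) \<le> (a * (u - t) + F u / (4*a) - (S u - S t))"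
    proof (rule mono_helper[OF ta(2), where f'="\<lambda>z. a + S' z ^ 2 / (4*a) - S' z"])
      show "((\<lambda>z. a * (z - t) + F z / (4*a) - (S z - S t)) has_real_derivative a + S' z ^ 2 / (4*a) - S' z)
          (at z within {t..u})" if "z \<in> {t..u}" for z
        using that ta(3) by (auto intro!: derivative_eq_intros dS dF')
    qed (use amgm in auto)
    moreover have "(a * (t - t) + F t / (4*a) + (S t - S t)) \<le> (a * (u - t) + F u / (4*a) + (S u - S t))"
    proof (rule mono_helper[OF ta(2), where f'="\<lambda>z. a + S' z ^ 2 / (4*a) + S' z"])
      show "((\<lambda>z. a * (z - t) + F z / (4*a) + (S z - S t)) has_real_derivative a + S' z ^ 2 / (4*a) + S' z)
          (at z within {t..u})" if "z \<in> {t..u}" for z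
        using that ta(3) by (auto intro!: derivative_eq_intros dS dF')
    qed (use amgm in auto)
    ultimately show ?thesis by (simp add: diff_divide_distrib abs_le_iff)
  qed
  define k where "k = (\<lambda>\<omega> u::real. if \<omega> = 0 then u else sin (\<omega> * u) / \<omega>)"
  define \<Psi> where "\<Psi> = (\<lambda>u. \<integral>\<omega>. k \<omega> u \<partial>\<rho>)"
  have dk: "((\<lambda>u. k \<omega> u) has_real_derivative cos (\<omega> * u)) (at u within X)" for \<omega> u X
  proof (cases "\<omega> = 0")
    case True
    then show ?thesis by (simp add: k_def)
  next
    case False
    then have "((\<lambda>u. sin (\<omega> * u) / \<omega>) has_real_derivative cos (\<omega> * u)) (at u within X)"
      by (auto intro!: derivative_eq_intros)
    then show ?thesis using False by (simp add: k_def)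
  qed
  have kdiff: "\<bar>k \<omega> x - k \<omega> y\<bar> \<le> \<bar>x - y\<bar>" for \<omega> x y
    using field_differentiable_bound[of UNIV "\<lambda>u. k \<omega> u" "\<lambda>u. cos (\<omega> * u)" 1 x y] dk by auto
  have mk: "(\<lambda>\<omega>. k \<omega> u) \<in> borel_measurable \<rho>" for u
    unfolding k_def by (rule meas_borel_transfer[OF r(1)]) measurable
  have intk: "integrable \<rho> (\<lambda>\<omega>. k \<omega> u)" for u
  proof (rule \<rho>.integrable_const_bound[where B="\<bar>u\<bar>"])
    show "AE \<omega> in \<rho>. norm (k \<omega> u) \<le> \<bar>u\<bar>"
    proof (intro AE_I2)
      fix \<omega> have "k \<omega> 0 = 0" by (simp add: k_def)
      then show "norm (k \<omega> u) \<le> \<bar>u\<bar>" using kdiff[of \<omega> u 0] by simp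
    qed
  qed (rule mk)
  have dPsi: "(\<Psi> has_real_derivative S u) (at u within {a..b})" if "u \<in> {a..b}" for u a b
  proof -
    have "(\<Psi> has_real_derivative (\<integral>\<omega>. cos (\<omega> * u) \<partial>\<rho>)) (at u within {a..b})"
      unfolding \<Psi>_def
      by (rule deriv_LINT[OF r(2), where B=1]) (use that in \<open>auto intro!: intk dk cont_meas[OF r(1)] continuous_intros\<close>)
    then show ?thesis using r(4) by simp
  qed
  define A where "A = (\<lambda>n::nat. {\<omega>::real. 0 < \<bar>\<omega>\<bar> \<and> \<bar>\<omega>\<bar> < 1 / real (Suc n)})"
  have Asets: "A n \<in> sets \<rho>" for n unfolding A_def r(1) by measurable
  have Alim: "(\<lambda>n. measure \<rho> (A n)) \<longlonglongrightarrow> 0"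
  proof -
    have "decseq A" unfolding A_def decseq_def
    proof (intro allI impI subsetI)
      fix m n :: nat and x assume "m \<le> n" "x \<in> {\<omega>::real. 0 < \<bar>\<omega>\<bar> \<and> \<bar>\<omega>\<bar> < 1 / real (Suc n)}"
      moreover have "1 / real (Suc n) \<le> 1 / real (Suc m)" using \<open>m \<le> n\<close> by (simp add: frac_le)
      ultimately show "x \<in> {\<omega>::real. 0 < \<bar>\<omega>\<bar> \<and> \<bar>\<omega>\<bar> < 1 / real (Suc m)}" by auto
    qed
    moreover have "(\<Inter>i. A i) = {}"
    proof (intro equalityI subsetI)
      fix x assume x: "x \<in> (\<Inter>i. A i)"
      then have "0 < \<bar>x\<bar>" by (auto simp: A_def)
      then obtain n where "inverse (real (Suc n)) < \<bar>x\<bar>" using reals_Archimedean by blast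
      then have "x \<notin> A n" by (auto simp: A_def field_simps)
      then show "x \<in> {}" using x by auto
    qed auto
    ultimately show ?thesis using \<rho>.finite_Lim_measure_decseq[of A] Asets by auto
  qed
  define c where "c = measure \<rho> {0}"
  have stepA: "\<bar>\<Psi> (t + h) - \<Psi> t - h * c\<bar> \<le> h * measure \<rho> (A n) + 2 * real (Suc n) * S0"
    if h: "h > 0" for t h n
  proof -
    have m0: "{0::real} \<in> sets \<rho>" unfolding r(1) by measurable
    have ii: "integrable \<rho> (indicator {0::real} :: real \<Rightarrow> real)"
      using m0 by (intro \<rho>.integrable_const_bound[where B=1]) auto
    have e1: "\<Psi> (t + h) - \<Psi> t - h * c = (\<integral>\<omega>. k \<omega> (t + h) - k \<omega> t - h * indicator {0} \<omega> \<partial>\<rho>)"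
    proof -
      have "(\<integral>\<omega>. k \<omega> (t + h) - k \<omega> t - h * indicator {0} \<omega> \<partial>\<rho>)
          = (\<integral>\<omega>. k \<omega> (t + h) \<partial>\<rho>) - (\<integral>\<omega>. k \<omega> t \<partial>\<rho>) - (\<integral>\<omega>. h * indicator {0} \<omega> \<partial>\<rho>)"
        using intk ii by (simp add: integral_diff)
      then show ?thesis by (simp add: \<Psi>_def c_def r(3))
    qed
    have "\<bar>\<integral>\<omega>. k \<omega> (t + h) - k \<omega> t - h * indicator {0} \<omega> \<partial>\<rho>\<bar>
        \<le> (\<integral>\<omega>. h * indicator (A n) \<omega> + 2 * real (Suc n) \<partial>\<rho>)"
    proof (rule integral_abs_bound_integral)
      show "integrable \<rho> (\<lambda>\<omega>. k \<omega> (t + h) - k \<omega> t - h * indicator {0} \<omega>)"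
        by (rule Bochner_Integration.integrable_diff[OF Bochner_Integration.integrable_diff[OF intk intk] integrable_mult_right[OF ii]])
      show "integrable \<rho> (\<lambda>\<omega>. h * indicator (A n) \<omega> + 2 * real (Suc n))"
      proof -
        have "integrable \<rho> (indicator (A n) :: real \<Rightarrow> real)"
          using Asets by (intro \<rho>.integrable_const_bound[where B=1]) auto
        then show ?thesis by (intro Bochner_Integration.integrable_add integrable_mult_right) auto
      qed
      fix \<omega> :: real
      show "\<bar>k \<omega> (t + h) - k \<omega> t - h * indicator {0} \<omega>\<bar> \<le> h * indicator (A n) \<omega> + 2 * real (Suc n)"
      proof (cases "\<omega> = 0")
        case True
        then show ?thesis using h by (simp add: k_def A_def)
      next
        case False
        show ?thesis
        proof (cases "\<omega> \<in> A n")
          case True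
          then show ?thesis using kdiff[of \<omega> "t + h" t] False h by simp
        next
          case nA: False
          then have "\<bar>\<omega>\<bar> \<ge> 1 / real (Suc n)" using False by (auto simp: A_def)
          then have w1: "1 / \<bar>\<omega>\<bar> \<le> real (Suc n)" using False by (simp add: field_simps)
          have "\<bar>sin (\<omega> * (t + h)) / \<omega> - sin (\<omega> * t) / \<omega>\<bar> = \<bar>sin (\<omega> * (t + h)) - sin (\<omega> * t)\<bar> / \<bar>\<omega>\<bar>"
            using False by (simp add: diff_divide_distrib[symmetric] abs_divide)
          also have "\<dots> \<le> 2 / \<bar>\<omega>\<bar>"
          proof -
            have s2: "\<bar>sin (\<omega> * (t + h)) - sin (\<omega> * t)\<bar> \<le> 2"
              unfolding abs_le_iff using sin_le_one[of "\<omega> * (t + h)"] sin_le_one[of "\<omega> * t"]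
                sin_ge_minus_one[of "\<omega> * (t + h)"] sin_ge_minus_one[of "\<omega> * t"] by linarith
            show ?thesis by (intro divide_right_mono s2) auto
          qed
          also have "\<dots> \<le> 2 * real (Suc n)" using w1 by simp
          finally show ?thesis using False nA by (simp add: k_def)
        qed
      qed
    qed
    also have "(\<integral>\<omega>. h * indicator (A n) \<omega> + 2 * real (Suc n) \<partial>\<rho>) = h * measure \<rho> (A n) + 2 * real (Suc n) * S0"
    proof -
      have ii: "integrable \<rho> (indicator (A n) :: real \<Rightarrow> real)"
        using Asets by (intro \<rho>.integrable_const_bound[where B=1]) auto
      then show ?thesis using mrho by (simp add: r(3))
    qed
    finally show ?thesis using e1 by simp
  qed
  have key: "\<exists>N. \<forall>t\<ge>N. \<bar>S t - c\<bar> \<le> \<epsilon>" if eps: "\<epsilon> > 0" for \<epsilon>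
  proof -
    have "eventually (\<lambda>n. measure \<rho> (A n) < \<epsilon> / 4) sequentially"
      using order_tendstoD(2)[OF Alim, of "\<epsilon>/4"] eps by auto
    then obtain n where n: "measure \<rho> (A n) < \<epsilon> / 4"
      by (auto simp: eventually_sequentially)
    define h where "h = 8 * real (Suc n) * S0 / \<epsilon>"
    have h0: "h > 0" using S0_pos eps by (simp add: h_def)
    have hA: "2 * real (Suc n) * S0 = h * \<epsilon> / 4" using eps by (simp add: h_def field_simps)
    define a where "a = \<epsilon> / (4 * h)"
    have a0: "a > 0" using eps h0 by (simp add: a_def)
    have ah: "a * h = \<epsilon> / 4" using h0 by (simp add: a_def)
    obtain N where N: "N \<ge> 0" "\<forall>t\<ge>N. \<forall>u\<in>{t..t+h}. F u - F t < a * \<epsilon>"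
      using Fconv[of "a*\<epsilon>" h] a0 eps h0 by auto
    show ?thesis
    proof (intro exI[of _ N] allI impI)
      fix t assume t: "N \<le> t"
      have hm: "h * measure \<rho> (A n) \<le> h * (\<epsilon> / 4)" using n h0 by (intro mult_left_mono) auto
      have A1: "\<bar>\<Psi> (t + h) - \<Psi> t - h * c\<bar> \<le> h * \<epsilon> / 2"
        using stepA[OF h0, of t n] hm hA by linarith
      have osc: "\<bar>S u - S t\<bar> \<le> \<epsilon> / 2" if u: "u \<in> {t..t+h}" for u
      proof -
        have "\<bar>S u - S t\<bar> \<le> a * (u - t) + (F u - F t) / (4 * a)"
          using Sosc[of t u a] N t u a0 by auto
        moreover have "a * (u - t) \<le> a * h" using u a0 by (intro mult_left_mono) auto
        moreover have "(F u - F t) / (4 * a) \<le> (a * \<epsilon>) / (4 * a)"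
          using N(2) t u a0 by (intro divide_right_mono) (auto simp: less_imp_le)
        moreover have "(a * \<epsilon>) / (4 * a) = \<epsilon> / 4" using a0 by simp
        ultimately show ?thesis using ah by linarith
      qed
      have "norm ((\<Psi> (t+h) - (t+h) * S t) - (\<Psi> t - t * S t)) \<le> \<epsilon>/2 * norm ((t+h) - t)"
      proof (rule field_differentiable_bound[where S="{t..t+h}" and f'="\<lambda>z. S z - S t"])
        show "((\<lambda>z. \<Psi> z - z * S t) has_field_derivative S z - S t) (at z within {t..t+h})"
          if "z \<in> {t..t+h}" for z
          using dPsi[OF that] by (auto intro!: derivative_eq_intros)
        show "norm (S z - S t) \<le> \<epsilon> / 2" if "z \<in> {t..t+h}" for z using osc[OF that] by simp
      qed (use h0 in auto)
      then have B1: "\<bar>\<Psi> (t + h) - \<Psi> t - h * S t\<bar> \<le> h * \<epsilon> / 2" using h0 by (simp add: algebra_simps)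
      have "\<bar>h * (S t - c)\<bar> \<le> h * \<epsilon>" using A1 B1 unfolding abs_le_iff by (simp add: algebra_simps)
      then have "h * \<bar>S t - c\<bar> \<le> h * \<epsilon>" using h0 by (simp add: abs_mult)
      then show "\<bar>S t - c\<bar> \<le> \<epsilon>" using h0 by simp
    qed
  qed
  have "(S \<longlongrightarrow> c) at_top"
  proof (rule tendstoI)
    fix e :: real assume e: "e > 0"
    obtain N where N: "\<forall>t\<ge>N. \<bar>S t - c\<bar> \<le> e/2" using key[of "e/2"] e by auto
    show "eventually (\<lambda>t. dist (S t) c < e) at_top"
      unfolding eventually_at_top_linorder dist_real_def using N e by force
  qed
  then show ?thesis by blast
qed

end
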